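(* Let $p$ be an odd prime with $p\equiv 1\pmod 8$. Then there exists a perfect $B[-1,3](p)$ set if and only if the multiplicative order $o(-\tfrac32)$ of $-3\cdot 2^{-1}\bmod p$ in $\mathbb{Z}_p^\ast$ is odd and $4$ divides the multiplicative order $o(2)$ of $2$ in $\mathbb{Z}_p^\ast$.
   Context: $\mathbb{Z}_p^\ast$ is the multiplicative group of nonzero residues modulo $p$, and $o(x)$ denotes the order of $x$ in this group. A set $B\subseteq\mathbb{Z}_p$ is a perfect $B[-1,3](p)$ set if every nonzero element of $\mathbb{Z}_p$ has a unique representation $ab \bmod p$ with $a\in\{-1,1,2,3\}$ and $b\in B$ (and $0$ has no such representation); equivalently $B\subseteq\mathbb{Z}_p^\ast$, $|B|=(p-1)/4$, and the sets $\{-b,b,2b,3b\}$, $b\in B$, partition $\mathbb{Z}_p^\ast$. *)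

theory Defs
  imports "HOL-Number_Theory.Number_Theory"
begin

text \<open>Residues of Z_p are represented by the integers 0,...,p-1.
  The multiplier set A = {-1,1,2,3} is taken as a set of integers and products
  are compared modulo p.\<close>

definition perfect_B_m1_3 :: "nat \<Rightarrow> int set \<Rightarrow> bool" where
  "perfect_B_m1_3 p B \<longleftrightarrow>
     B \<subseteq> {0..<int p} \<and>
     (\<forall>x\<in>{1..<int p}. \<exists>!ab. fst ab \<in> {-1,1,2,3} \<and> snd ab \<in> B \<and>
                                   [fst ab * snd ab = x] (mod int p)) \<and>
     (\<forall>a\<in>{-1,1,2,3}. \<forall>b\<in>B. \<not> [a * b = 0] (mod int p))"

definition minus_three_halves :: "nat \<Rightarrow> nat" where
  "minus_three_halves p = (THE c. c < p \<and> [2 * int c = -3] (mod int p))"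

end

theory Submission imports Defs begin

lemma bit_add_same:
  fixes j w :: int
  shows "odd ((j + 2^i*w) div 2^i) \<longleftrightarrow> (odd (j div 2^i) \<noteq> odd w)"
proof -
  have "(j + 2^i*w) div 2^i = j div 2^i + w" by simp
  thus ?thesis by auto
qed

lemma bit_add_high:
  fixes j w :: int
  assumes "i < l"
  shows "odd ((j + 2^l*w) div 2^i) \<longleftrightarrow> odd (j div 2^i)"
proof -
  have "(2::int)^l = 2^(l-i) * 2^i" using assms by (simp flip: power_add)
  hence "j + 2^l*w = j + (2^(l-i)*w) * 2^i" by simp
  hence "(j + 2^l*w) div 2^i = 2^(l-i)*w + j div 2^i"
    by (simp only: div_mult_self1[of "(2::int)^i"]) simp
  moreover have "even ((2::int)^(l-i)*w)" using assms by simp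
  ultimately show ?thesis by simp
qed

definition Q :: "nat \<Rightarrow> nat \<Rightarrow> int \<Rightarrow> bool" where
  "Q s e j \<longleftrightarrow> even (j div 2^s) \<and> even (j div 2^(e-1))"

lemma Q_period:
  assumes "s + 2 \<le> e"
  shows "Q s e (j + 2^e * t) \<longleftrightarrow> Q s e j"
proof -
  have "s < e" "e - 1 < e" using assms by auto
  thus ?thesis using bit_add_high[of s e j t] bit_add_high[of "e-1" e j t]
  unfolding Q_def by blast
qed

lemma Q_exactly_one:
  fixes K m u v :: int
  assumes se: "s + 2 \<le> e" and m: "odd m" and u: "odd u"
  defines "K1 \<equiv> K - 2^(e-1)*m" and "K2 \<equiv> K - 2^s*u" and "K3 \<equiv> K - 2^(e-1)*m - 2^s*u - 2^e*v"
  shows "Q s e K \<or> Q s e K1 \<or> Q s e K2 \<or> Q s e K3"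
    and "\<not> (Q s e K \<and> Q s e K1)"
    and "\<not> (Q s e K \<and> Q s e K2)"
    and "\<not> (Q s e K \<and> Q s e K3)"
    and "\<not> (Q s e K1 \<and> Q s e K2)"
    and "\<not> (Q s e K1 \<and> Q s e K3)"
    and "\<not> (Q s e K2 \<and> Q s e K3)"
proof -
  have e1: "s < e - 1" "e - 1 < e" using se by auto
  have a1: "K1 = K + 2^(e-1)*(-m)" unfolding K1_def by simp
  have a2: "K2 = K + 2^s*(-u)" unfolding K2_def by simp
  define K4 where "K4 = K2 + 2^(e-1)*(-m)"
  have a3: "K3 = K4 + 2^e*(-v)" unfolding K3_def K4_def K2_def by simp
  have om: "odd (-m)" "odd (-u)" using m u by auto
  have h1: "odd (K1 div 2^s) \<longleftrightarrow> odd (K div 2^s)"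
    unfolding a1 by (rule bit_add_high[OF e1(1)])
  have h2: "odd (K1 div 2^(e-1)) \<longleftrightarrow> \<not> odd (K div 2^(e-1))"
    unfolding a1 using bit_add_same[of K "e-1" "-m"] om by blast
  have h3: "odd (K2 div 2^s) \<longleftrightarrow> \<not> odd (K div 2^s)"
    unfolding a2 using bit_add_same[of K s "-u"] om by blast
  have h4a: "odd (K4 div 2^s) \<longleftrightarrow> odd (K2 div 2^s)"
    unfolding K4_def by (rule bit_add_high[OF e1(1)])
  have h4b: "odd (K3 div 2^s) \<longleftrightarrow> odd (K4 div 2^s)"
    unfolding a3 using e1 by (intro bit_add_high) auto
  have h5a: "odd (K4 div 2^(e-1)) \<longleftrightarrow> \<not> odd (K2 div 2^(e-1))"
    unfolding K4_def using bit_add_same[of K2 "e-1" "-m"] om by blast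
  have h5b: "odd (K3 div 2^(e-1)) \<longleftrightarrow> odd (K4 div 2^(e-1))"
    unfolding a3 using e1 by (intro bit_add_high) auto
  show "Q s e K \<or> Q s e K1 \<or> Q s e K2 \<or> Q s e K3"
    and "\<not> (Q s e K \<and> Q s e K1)"
    and "\<not> (Q s e K \<and> Q s e K2)"
    and "\<not> (Q s e K \<and> Q s e K3)"
    and "\<not> (Q s e K1 \<and> Q s e K2)"
    and "\<not> (Q s e K1 \<and> Q s e K3)"
    and "\<not> (Q s e K2 \<and> Q s e K3)"
    unfolding Q_def using h1 h2 h3 h4a h4b h5a h5b by blast+
qed


lemma two_pow_odd_decomp:
  fixes n :: nat
  assumes "n > 0"
  shows "\<exists>e m. n = 2^e * m \<and> odd m"
  using assms
proof (induction n rule: less_induct)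
  case (less n)
  show ?case
  proof (cases "odd n")
    case True
    then show ?thesis by (intro exI[of _ 0] exI[of _ n]) simp
  next
    case False
    then obtain k where k: "n = 2 * k" by blast
    with less.prems have "k < n" "k > 0" by auto
    from less.IH[OF this] obtain e m where "k = 2^e*m" "odd m" by blast
    with k show ?thesis by (intro exI[of _ "Suc e"] exI[of _ m]) simp
  qed
qed

lemma odd_dvd_cancel2:
  fixes q m :: nat
  assumes "odd q" "q dvd 2^e * m"
  shows "q dvd m"
proof -
  have "coprime q 2" using assms(1) by (simp add: coprime_commute)
  hence "coprime q (2^e)" by simp
  thus ?thesis using assms(2) coprime_dvd_mult_right_iff by blast
qed

lemma not4_dvd:
  fixes r m :: nat
  assumes "odd m" "r dvd 2^e * m" "\<not> 4 dvd r"
  shows "r dvd 2 * m"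
proof (cases "odd r")
  case True
  then show ?thesis using odd_dvd_cancel2[OF True assms(2)] by simp
next
  case False
  then obtain r' where r: "r = 2 * r'" by blast
  have "odd r'" using assms(3) r by auto
  show ?thesis
  proof (cases e)
    case 0
    then show ?thesis using assms r by auto
  next
    case (Suc e')
    then have "r' dvd 2^e' * m" using assms(2) r by simp
    then have "r' dvd m" using odd_dvd_cancel2[OF \<open>odd r'\<close>] by blast
    then show ?thesis using r by simp
  qed
qed

lemma sq_one_mod_prime:
  fixes x :: int and p :: nat
  assumes "prime p" "[x^2 = 1] (mod int p)"
  shows "[x = 1] (mod int p) \<or> [x = -1] (mod int p)"
proof -
  have pi: "prime (int p)" using assms(1) by simp
  have "int p dvd x^2 - 1" using assms(2) by (simp add: cong_iff_dvd_diff)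
  moreover have "x^2 - 1 = (x - 1) * (x + 1)" by (simp add: power2_eq_square algebra_simps)
  ultimately have "int p dvd (x - 1) * (x + 1)" by simp
  hence "int p dvd (x - 1) \<or> int p dvd (x + 1)" using pi prime_dvd_mult_iff by blast
  thus ?thesis by (auto simp: cong_iff_dvd_diff)
qed


context
  fixes p g :: nat
  assumes pp: "prime p" and gp: "residue_primroot p g"
begin

lemma p_gt1: "p > 1" using pp prime_gt_1_nat by blast

lemma ordg: "ord p g = p - 1"
  using gp pp by (simp add: residue_primroot_def totient_prime)

lemma cop_g: "coprime p g"
  using gp by (simp add: residue_primroot_def)

lemma G1: "[int g ^ i = int g ^ j] (mod int p) \<longleftrightarrow> [i = j] (mod (p - 1))"
  by (metis cong_int_iff of_nat_power order_divides_expdiff cop_g ordg)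

lemma G3: "\<not> int p dvd int g ^ k"
proof
  assume "int p dvd int g ^ k"
  hence "p dvd g ^ k" by (metis of_nat_dvd_iff of_nat_power)
  hence "p dvd g" using pp prime_dvd_power by blast
  hence "is_unit p" using coprime_common_divisor[OF cop_g dvd_refl] by blast
  thus False using p_gt1 by simp
qed

lemma G2:
  assumes "\<not> int p dvd x"
  shows "\<exists>k. [int g ^ k = x] (mod int p)"
proof -
  define y where "y = nat (x mod int p)"
  have y1: "int y = x mod int p" unfolding y_def using p_gt1 by simp
  have "x mod int p \<noteq> 0" using assms by (simp add: dvd_eq_mod_eq_0)
  hence ypos: "y > 0" using y1 p_gt1
    by (metis Euclidean_Rings.pos_mod_sign gr0I of_nat_0 of_nat_0_less_iff order_less_le)
  have "y < p" using y1 p_gt1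
    by (metis Euclidean_Rings.pos_mod_bound of_nat_0_less_iff of_nat_less_iff order.strict_trans zero_less_one)
  hence "\<not> p dvd y" using ypos by (auto dest: dvd_imp_le)
  hence "coprime y p" using pp prime_imp_coprime_nat coprime_commute by blast
  hence "y \<in> totatives p" using ypos \<open>y < p\<close> by (auto simp: totatives_def)
  hence "y \<in> (\<lambda>i. g ^ i mod p) ` {..<totient p}"
    using residue_primroot_is_generator[OF p_gt1 gp] unfolding bij_betw_def by simp
  then obtain i where "g ^ i mod p = y" by blast
  hence "int g ^ i mod int p = x mod int p" using y1 by (metis of_nat_mod of_nat_power)
  thus ?thesis by (auto simp: cong_def)
qed

lemma cardD:
  assumes n: "p - 1 = 2^e * m" and e: "e > 0"
  shows "card {x\<in>{1..<int p}. [x^(2*m) = 1] (mod int p)} = 2*m"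
proof -
  define H where "H = (2::nat)^(e-1)"
  obtain e' where e': "e = Suc e'" using e by (cases e) auto
  have nH: "p - 1 = H * (2*m)" using n unfolding H_def e' by simp
  have mpos: "m > 0" using n p_gt1 by (cases m) auto
  have Hpos: "H > 0" unfolding H_def by simp
  define f where "f = (\<lambda>k. int g ^ (H*k) mod int p)"
  have inj: "inj_on f {..<2*m}"
  proof
    fix k l assume kl: "k \<in> {..<2*m}" "l \<in> {..<2*m}" "f k = f l"
    hence "[int g ^ (H*k) = int g ^ (H*l)] (mod int p)" unfolding f_def cong_def by simp
    hence "[H*k = H*l] (mod (p - 1))" using G1 by blast
    moreover have "H*k < p - 1" "H*l < p - 1" using kl nH Hpos by auto
    ultimately have "H*k = H*l" using cong_less_imp_eq_nat by blast
    thus "k = l" using Hpos by simp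
  qed
  have img: "f ` {..<2*m} = {x\<in>{1..<int p}. [x^(2*m) = 1] (mod int p)}"
  proof (intro equalityI subsetI)
    fix x assume "x \<in> f ` {..<2*m}"
    then obtain k where k: "x = f k" by blast
    have "x \<ge> 0" "x < int p" unfolding k f_def using p_gt1 by auto
    moreover have "x \<noteq> 0" using G3[of "H*k"] unfolding k f_def by (auto simp: dvd_eq_mod_eq_0)
    moreover have "[x^(2*m) = (int g ^ (H*k))^(2*m)] (mod int p)"
      unfolding k f_def by (intro cong_pow) (simp add: cong_def)
    moreover have "(int g ^ (H*k))^(2*m) = int g ^ ((p-1)*k)"
    proof -
      have "(p-1)*k = (H*k)*(2*m)" using nH by simp
      thus ?thesis by (simp only: power_mult)
    qed
    moreover have "[int g ^ ((p-1)*k) = int g ^ 0] (mod int p)"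
      using G1[of "(p-1)*k" 0] by (simp add: cong_0_iff)
    ultimately show "x \<in> {x\<in>{1..<int p}. [x^(2*m) = 1] (mod int p)}"
      by (auto intro: cong_trans)
  next
    fix x assume x: "x \<in> {x\<in>{1..<int p}. [x^(2*m) = 1] (mod int p)}"
    hence "\<not> int p dvd x" by (auto dest: zdvd_imp_le)
    then obtain j where j: "[int g ^ j = x] (mod int p)" using G2 by blast
    define j' where "j' = j mod (p - 1)"
    have "[j' = j] (mod (p-1))" unfolding j'_def by (simp add: cong_def)
    hence j': "[int g ^ j' = x] (mod int p)" using G1 j cong_trans by blast
    have "[int g ^ (j' * (2*m)) = x ^ (2*m)] (mod int p)"
      using cong_pow[OF j', of "2*m"] by (simp add: power_mult)
    hence "[int g ^ (j' * (2*m)) = int g ^ 0] (mod int p)" using x cong_trans by auto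
    hence "[j' * (2*m) = 0] (mod (p-1))" using G1 by blast
    hence "H * (2*m) dvd j' * (2*m)" using nH by (simp add: cong_0_iff)
    hence "H dvd j'" using mpos by simp
    then obtain k where k: "j' = H * k" by blast
    have "j' < p - 1" unfolding j'_def using p_gt1 by simp
    hence "k < 2*m" using nH k Hpos by auto
    have "f k = x mod int p" unfolding f_def using j' k by (simp add: cong_def)
    also have "\<dots> = x" using x by simp
    finally show "x \<in> f ` {..<2*m}" using \<open>k < 2*m\<close> by blast
  qed
  show ?thesis using card_image[OF inj] img by simp
qed

end


context
  fixes p :: nat
  assumes pp: "prime p" and p8: "[p = 1] (mod 8)"
begin

lemma p_ge9: "p \<ge> 9"
proof -
  have "p mod 8 = 1" using p8 by (simp add: cong_def)
  moreover have "p \<ge> 2" using pp prime_ge_2_nat by blast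
  ultimately show ?thesis by presburger
qed

lemma p_odd: "odd p"
proof -
  have "p mod 8 = 1" using p8 by (simp add: cong_def)
  thus ?thesis by presburger
qed

lemma pi_prime: "prime (int p)" using pp by simp

lemma mth: "minus_three_halves p = (p - 3) div 2"
  unfolding minus_three_halves_def
proof (rule the_equality)
  have e: "2 * ((p - 3) div 2) = p - 3" using p_odd p_ge9 by presburger
  hence "2 * int ((p - 3) div 2) = int p - 3" using p_ge9 by linarith
  thus "(p - 3) div 2 < p \<and> [2 * int ((p - 3) div 2) = - 3] (mod int p)"
    by (simp add: cong_iff_dvd_diff)
next
  fix c assume c: "c < p \<and> [2 * int c = - 3] (mod int p)"
  have e: "2 * int ((p - 3) div 2) = int p - 3" using p_odd p_ge9 by presburger
  hence "[2 * int ((p - 3) div 2) = - 3] (mod int p)" by (simp add: cong_iff_dvd_diff)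
  hence "[2 * int c = 2 * int ((p - 3) div 2)] (mod int p)" using c cong_sym cong_trans by blast
  moreover have "coprime (2::int) (int p)"
  proof -
    have "\<not> int p dvd 2" using p_ge9 by (auto dest: zdvd_imp_le)
    thus ?thesis using pi_prime prime_imp_coprime_int[of "int p" 2] coprime_commute by blast
  qed
  ultimately have "[int c = int ((p - 3) div 2)] (mod int p)" using cong_mult_lcancel by blast
  hence "[c = (p - 3) div 2] (mod p)" by (simp add: cong_int_iff)
  moreover have "(p - 3) div 2 < p" using p_ge9 by simp
  ultimately show "c = (p - 3) div 2" using c cong_less_imp_eq_nat[of c p "(p-3) div 2"] by blast
qed

definition c0 where "c0 = (p - 3) div 2"

lemma c0_cong: "[2 * int c0 = -3] (mod int p)"
proof -
  have "2 * int c0 = int p - 3" unfolding c0_def using p_odd p_ge9 by presburger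
  thus ?thesis by (simp add: cong_iff_dvd_diff)
qed

lemma c0_range: "c0 \<ge> 1" "c0 < p" unfolding c0_def using p_ge9 by auto

lemma cop_c0: "coprime p c0"
proof -
  have "\<not> p dvd c0" using c0_range by (auto dest: dvd_imp_le)
  thus ?thesis using pp prime_imp_coprime_nat by blast
qed

lemma cop_2: "coprime p 2"
proof -
  have "\<not> p dvd 2" using p_ge9 by (auto dest: dvd_imp_le)
  thus ?thesis using pp prime_imp_coprime_nat by blast
qed

lemma A_ndvd: "a \<in> {-1,1,2,3::int} \<Longrightarrow> \<not> int p dvd a"
proof
  assume a: "a \<in> {-1,1,2,3::int}" and d: "int p dvd a"
  have "a \<noteq> 0" using a by auto
  hence "\<bar>int p\<bar> \<le> \<bar>a\<bar>" using d dvd_imp_le_int by blast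
  thus False using a p_ge9 by auto
qed

lemma A_cop: "a \<in> {-1,1,2,3::int} \<Longrightarrow> coprime a (int p)"
  using A_ndvd[of a] pi_prime prime_imp_coprime_int[of "int p" a] coprime_commute by blast

lemma mul_ndvd: "\<not> int p dvd a \<Longrightarrow> \<not> int p dvd b \<Longrightarrow> \<not> int p dvd a * b"
  using pi_prime prime_dvd_mult_iff[of "int p" a b] by blast

context
  fixes B :: "int set"
  assumes PB: "perfect_B_m1_3 p B"
begin

lemma BS: "B \<subseteq> {0..<int p}" using PB unfolding perfect_B_m1_3_def by blast

lemma EU: "x \<in> {1..<int p} \<Longrightarrow> \<exists>!ab. fst ab \<in> {-1,1,2,3} \<and> snd ab \<in> B \<and> [fst ab * snd ab = x] (mod int p)"
  using PB unfolding perfect_B_m1_3_def by blast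

lemma NZ: "a \<in> {-1,1,2,3} \<Longrightarrow> b \<in> B \<Longrightarrow> \<not> [a * b = 0] (mod int p)"
  using PB unfolding perfect_B_m1_3_def by blast

lemma B_eq_mod: "b \<in> B \<Longrightarrow> b mod int p = b" using BS by auto

lemma U:
  assumes a1: "a1 \<in> {-1,1,2,3}" and a2: "a2 \<in> {-1,1,2,3}" and b1: "b1 \<in> B" and b2: "b2 \<in> B"
    and c: "[a1 * b1 = a2 * b2] (mod int p)"
  shows "a1 = a2 \<and> b1 = b2"
proof -
  define x where "x = (a1 * b1) mod int p"
  have "x \<noteq> 0" using NZ[OF a1 b1] unfolding x_def by (simp add: cong_def)
  moreover have "x \<ge> 0" "x < int p" unfolding x_def using p_ge9 by auto
  ultimately have x: "x \<in> {1..<int p}" by auto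
  have P1: "[a1 * b1 = x] (mod int p)" unfolding x_def by (simp add: cong_def)
  have P2: "[a2 * b2 = x] (mod int p)" using c P1 cong_sym cong_trans by blast
  from EU[OF x] have "(a1, b1) = (a2, b2)"
    using a1 a2 b1 b2 P1 P2 by (metis fst_conv snd_conv)
  thus ?thesis by simp
qed

lemma cinv:
  assumes b: "b \<in> B"
  shows "(int c0 * b) mod int p \<in> B"
proof -
  have A3: "(3::int) \<in> {-1,1,2,3}" by simp
  define x where "x = (-3 * b) mod int p"
  have "x \<noteq> 0"
  proof
    assume "x = 0"
    hence "int p dvd -3 * b" unfolding x_def by (simp add: dvd_eq_mod_eq_0)
    hence "[3 * b = 0] (mod int p)" by (simp add: cong_0_iff)
    thus False using NZ[OF A3 b] by simp
  qed
  moreover have "x \<ge> 0" "x < int p" unfolding x_def using p_ge9 by auto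
  ultimately have x: "x \<in> {1..<int p}" by auto
  from EU[OF x] obtain a b' where ab: "a \<in> {-1,1,2,3}" "b' \<in> B" "[a * b' = x] (mod int p)"
    by auto
  have r: "[a * b' = -3 * b] (mod int p)" using ab(3) unfolding x_def by (simp add: cong_def)
  consider "a = -1" | "a = 1" | "a = 2" | "a = 3" using ab(1) by auto
  thus ?thesis
  proof cases
    case 1
    hence "[- b' = - (3 * b)] (mod int p)" using r by simp
    hence "[1 * b' = 3 * b] (mod int p)" using cong_minus_minus_iff[of b' "3*b" "int p"] by simp
    thus ?thesis using U[of 1 3 b' b] ab(2) b by simp
  next
    case 2
    hence "[- b' = - (-3 * b)] (mod int p)" using r cong_minus_minus_iff[of b' "-3*b" "int p"] by simp
    hence "[-1 * b' = 3 * b] (mod int p)" by simp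
    thus ?thesis using U[of "-1" 3 b' b] ab(2) b by simp
  next
    case 4
    hence "[3 * b' = 3 * (- b)] (mod int p)" using r by simp
    hence "[b' = - b] (mod int p)" using cong_mult_lcancel[OF A_cop[OF A3]] by blast
    hence "[1 * b' = -1 * b] (mod int p)" by simp
    thus ?thesis using U[of 1 "-1" b' b] ab(2) b by simp
  next
    case 3
    have "[2 * int c0 * b = -3 * b] (mod int p)" using cong_mult[OF c0_cong cong_refl[of b]] by simp
    hence "[2 * b' = 2 * (int c0 * b)] (mod int p)" using r 3 cong_sym cong_trans
      by (metis mult.assoc)
    hence "[b' = int c0 * b] (mod int p)"
      using cong_mult_lcancel[OF A_cop[of 2]] by simp
    hence "b' mod int p = (int c0 * b) mod int p" by (simp add: cong_def)
    thus ?thesis using B_eq_mod[OF ab(2)] ab(2) by simp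
  qed
qed

lemma cpow: "b \<in> B \<Longrightarrow> (int c0 ^ k * b) mod int p \<in> B"
proof (induction k)
  case 0
  then show ?case using B_eq_mod by simp
next
  case (Suc k)
  have "(int c0 ^ Suc k * b) mod int p = (int c0 * ((int c0 ^ k * b) mod int p)) mod int p"
    by (simp add: mod_mult_right_eq mult.assoc)
  thus ?case using cinv[OF Suc.IH[OF Suc.prems]] by simp
qed

lemma B_ne: "\<exists>b. b \<in> B"
proof -
  have "(1::int) \<in> {1..<int p}" using p_ge9 by simp
  from EU[OF this] show ?thesis by auto
qed

lemma B_nz: "b \<in> B \<Longrightarrow> b \<noteq> 0"
  using NZ[of 1 b] by auto

lemma ordc_odd: "odd (ord p c0)"
proof
  assume ev: "even (ord p c0)"
  have opos: "ord p c0 > 0" using cop_c0 by simp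
  obtain q where q: "ord p c0 = 2 * q" using ev by blast
  have "q > 0" "q < ord p c0" using q opos by auto
  hence n1: "\<not> [c0 ^ q = 1] (mod p)" using ord_minimal by blast
  have "[c0 ^ ord p c0 = 1] (mod p)" by (rule ord)
  hence "[(c0 ^ q)^2 = 1] (mod p)" using q by (simp add: power_mult[symmetric] mult.commute)
  hence "[int ((c0 ^ q)^2) = int 1] (mod int p)" using cong_int_iff by blast
  hence sq: "[(int c0 ^ q)^2 = 1] (mod int p)" by simp
  have "\<not> [int (c0 ^ q) = int 1] (mod int p)" using n1 cong_int_iff by blast
  hence "\<not> [int c0 ^ q = 1] (mod int p)" by simp
  hence y: "[int c0 ^ q = -1] (mod int p)" using sq_one_mod_prime[OF pp sq] by blast
  obtain b where b: "b \<in> B" using B_ne by blast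
  have b'': "(int c0 ^ q * b) mod int p \<in> B" using cpow[OF b] .
  have c1: "[1 * ((int c0 ^ q * b) mod int p) = -1 * b] (mod int p)"
    using cong_mult[OF y cong_refl[of b]] by (simp add: cong_def)
  have "1 = (-1::int)" using U[of 1 "-1" "(int c0 ^ q * b) mod int p" b, OF _ _ b'' b c1] by simp
  thus False by simp
qed

lemma ord2_4: "4 dvd ord p 2"
proof (rule ccontr)
  assume n4: "\<not> 4 dvd ord p 2"
  obtain g where gp: "residue_primroot p g" using prime_primitive_root_exists[OF _ pp] p_ge9 by force
  have "p - 1 > 0" using p_ge9 by simp
  then obtain e m where em: "p - 1 = 2^e * m" "odd m" using two_pow_odd_decomp by blast
  have e0: "e > 0"
  proof (rule ccontr)
    assume "\<not> e > 0"
    hence "p - 1 = m" using em by simp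
    thus False using em(2) p_odd p_ge9 by presburger
  qed
  have "\<not> p dvd 2" using p_ge9 by (auto dest: dvd_imp_le)
  hence f2: "[2 ^ (p - 1) = 1] (mod p)" using fermat_theorem[OF pp] by blast
  have "ord p 2 dvd p - 1" using f2 ord_divides by blast
  hence "ord p 2 dvd 2 * m" using not4_dvd[OF em(2) _ n4] em(1) by simp
  hence t2: "[2 ^ (2*m) = 1] (mod p)" using ord_divides by blast
  have "\<not> p dvd c0" using c0_range by (auto dest: dvd_imp_le)
  hence fc: "[c0 ^ (p - 1) = 1] (mod p)" using fermat_theorem[OF pp] by blast
  have "ord p c0 dvd p - 1" using fc ord_divides by blast
  hence "ord p c0 dvd 2^e * m" unfolding em(1) .
  hence "ord p c0 dvd m" by (rule odd_dvd_cancel2[OF ordc_odd])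
  hence "ord p c0 dvd 2 * m" by simp
  hence tc: "[c0 ^ (2*m) = 1] (mod p)" using ord_divides by blast
  have t2i: "[2 ^ (2*m) = 1] (mod int p)"
    using t2 cong_int_iff[of "2 ^ (2*m)" 1 p] by simp
  have tci: "[int c0 ^ (2*m) = 1] (mod int p)"
    using tc cong_int_iff[of "c0 ^ (2*m)" 1 p] by simp
  have Apow: "[a ^ (2*m) = 1] (mod int p)" if a: "a \<in> {-1,1,2,3::int}" for a
  proof -
    consider "a = -1" | "a = 1" | "a = 2" | "a = 3" using a by auto
    thus ?thesis
    proof cases
      case 4
      have "[- (2 * int c0) = - (-3)] (mod int p)"
        using c0_cong cong_minus_minus_iff[of "2 * int c0" "-3" "int p"] by blast
      hence "[3 = - (2 * int c0)] (mod int p)" using cong_sym by fastforce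
      hence "[3 ^ (2*m) = (- (2 * int c0)) ^ (2*m)] (mod int p)" by (rule cong_pow)
      moreover have "(- (2 * int c0)) ^ (2*m) = 2 ^ (2*m) * int c0 ^ (2*m)"
        by (simp add: power_mult_distrib)
      moreover have "[2 ^ (2*m) * int c0 ^ (2*m) = 1 * 1] (mod int p)"
        using cong_mult[OF t2i tci] .
      ultimately show ?thesis using 4 cong_trans by fastforce
    qed (use t2i in auto)
  qed
  define Di where "Di = {x\<in>{1..<int p}. [x^(2*m) = 1] (mod int p)}"
  have cD: "card Di = 2*m" unfolding Di_def using cardD[OF pp gp em(1) e0] .
  define F where "F = (\<lambda>(a::int, b::int). (a * b) mod int p)"
  have bij: "bij_betw F ({-1,1,2,3} \<times> (B \<inter> Di)) Di"
    unfolding bij_betw_def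
  proof (intro conjI)
    show "inj_on F ({-1,1,2,3} \<times> (B \<inter> Di))"
    proof (rule inj_onI)
      fix u v assume u: "u \<in> {-1,1,2,3} \<times> (B \<inter> Di)" and v: "v \<in> {-1,1,2,3} \<times> (B \<inter> Di)"
        and F: "F u = F v"
      obtain a1 b1 where u': "u = (a1, b1)" by fastforce
      obtain a2 b2 where v': "v = (a2, b2)" by fastforce
      have "[a1 * b1 = a2 * b2] (mod int p)" using F unfolding u' v' F_def by (simp add: cong_def)
      thus "u = v" using U[of a1 a2 b1 b2] u v unfolding u' v' by auto
    qed
    show "F ` ({-1,1,2,3} \<times> (B \<inter> Di)) = Di"
    proof (intro equalityI subsetI)
      fix y assume "y \<in> F ` ({-1,1,2,3} \<times> (B \<inter> Di))"
      then obtain a b where ab: "a \<in> {-1,1,2,3}" "b \<in> B" "b \<in> Di" and y: "y = (a * b) mod int p"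
        unfolding F_def by auto
      have "y \<noteq> 0" using NZ[OF ab(1,2)] y by (simp add: cong_def)
      moreover have "y \<ge> 0" "y < int p" using y p_ge9 by auto
      moreover have "[y ^ (2*m) = (a*b) ^ (2*m)] (mod int p)"
        unfolding y by (intro cong_pow) (simp add: cong_def)
      moreover have "[(a*b) ^ (2*m) = 1 * 1] (mod int p)"
        unfolding power_mult_distrib using cong_mult[OF Apow[OF ab(1)]] ab(3) unfolding Di_def by auto
      ultimately show "y \<in> Di" unfolding Di_def using cong_trans by fastforce
    next
      fix y assume y: "y \<in> Di"
      hence y1: "y \<in> {1..<int p}" unfolding Di_def by auto
      from EU[OF y1] obtain a b where ab: "a \<in> {-1,1,2,3}" "b \<in> B" "[a * b = y] (mod int p)"
        by auto
      have "y = (a * b) mod int p" using ab(3) y1 by (simp add: cong_def)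
      moreover have "b \<in> Di"
      proof -
        have b0: "b \<noteq> 0" using B_nz[OF ab(2)] .
        have "b \<ge> 0" "b < int p" using BS ab(2) by auto
        hence "b \<in> {1..<int p}" using b0 by auto
        moreover have "[b ^ (2*m) = 1] (mod int p)"
        proof -
          have "[a ^ (2*m) * b ^ (2*m) = y ^ (2*m)] (mod int p)"
            using cong_pow[OF ab(3), of "2*m"] by (simp add: power_mult_distrib)
          hence "[a ^ (2*m) * b ^ (2*m) = 1] (mod int p)" using y unfolding Di_def
            using cong_trans by blast
          moreover have "[a ^ (2*m) * b ^ (2*m) = 1 * b ^ (2*m)] (mod int p)"
            using cong_mult[OF Apow[OF ab(1)] cong_refl] .
          ultimately have "[1 * b ^ (2*m) = 1] (mod int p)"
            using cong_sym cong_trans by blast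
          thus ?thesis by simp
        qed
        ultimately show ?thesis unfolding Di_def by blast
      qed
      ultimately have "F (a, b) = y" "(a, b) \<in> {-1,1,2,3} \<times> (B \<inter> Di)"
        unfolding F_def using ab by auto
      thus "y \<in> F ` ({-1,1,2,3} \<times> (B \<inter> Di))" by (metis image_eqI)
    qed
  qed
  have "card Di = card ({-1,1,2,3::int} \<times> (B \<inter> Di))" using bij_betw_same_card[OF bij] by simp
  also have "\<dots> = 4 * card (B \<inter> Di)" by (simp add: card_cartesian_product)
  finally have "2 * m = 4 * card (B \<inter> Di)" using cD by simp
  hence "even m" by presburger
  thus False using em(2) by simp
qed

end

lemma suff:
  assumes oc: "odd (ord p c0)" and o2: "4 dvd ord p 2"
  shows "\<exists>B. perfect_B_m1_3 p B"
proof -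
  obtain g where gp: "residue_primroot p g" using prime_primitive_root_exists[OF _ pp] p_ge9 by force
  have "p - 1 > 0" using p_ge9 by simp
  then obtain e m where em: "p - 1 = 2^e * m" "odd m" using two_pow_odd_decomp by blast
  have e0: "e > 0"
  proof (rule ccontr)
    assume "\<not> e > 0"
    hence "p - 1 = m" using em by simp
    thus False using em(2) p_odd p_ge9 by presburger
  qed
  obtain e' where e': "e = Suc e'" using e0 by (cases e) auto
  have mpos: "m > 0" using em(2) by (cases m) auto
  define h where "h = 2^e' * m"
  have n2: "p - 1 = 2 * h" unfolding h_def using em(1) e' by simp
  have ih: "int h = 2^(e-1) * int m" unfolding h_def e' by simp
  have intn: "int (p - 1) = 2^e * int m" using em(1) by simp
  have gh: "[int g ^ h = -1] (mod int p)"
  proof -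
    have "[int g ^ (2*h) = int g ^ 0] (mod int p)" using G1[OF pp gp, of "2*h" 0] n2
      by (simp add: cong_0_iff)
    hence sq: "[(int g ^ h)^2 = 1] (mod int p)" by (simp add: power_mult[symmetric] mult.commute)
    have "\<not> [h = 0] (mod (p - 1))"
    proof
      assume "[h = 0] (mod (p - 1))"
      hence "p - 1 dvd h" by (simp add: cong_0_iff)
      moreover have "0 < h" "h < p - 1" using n2 p_ge9 by auto
      ultimately show False by (auto dest: dvd_imp_le)
    qed
    hence "\<not> [int g ^ h = int g ^ 0] (mod int p)" using G1[OF pp gp, of h 0] by blast
    hence "\<not> [int g ^ h = 1] (mod int p)" by simp
    thus ?thesis using sq_one_mod_prime[OF pp sq] by blast
  qed
  have "\<not> int p dvd 2" using A_ndvd[of 2] by simp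
  then obtain tau where tau: "[int g ^ tau = 2] (mod int p)" using G2[OF pp gp] by blast
  have "tau > 0"
  proof (rule ccontr)
    assume "\<not> tau > 0"
    hence "[1 = 2] (mod int p)" using tau by simp
    hence "int p dvd 1" by (simp add: cong_iff_dvd_diff)
    thus False using p_ge9 by simp
  qed
  then obtain s u where su: "tau = 2^s * u" "odd u" using two_pow_odd_decomp by blast
  have se: "s + 2 \<le> e"
  proof (rule ccontr)
    assume "\<not> s + 2 \<le> e"
    hence "e' \<le> s" using e' by simp
    hence "2^e' dvd (2::nat)^s" by (simp add: le_imp_power_dvd)
    hence "(p - 1) dvd tau * (2*m)" unfolding n2 h_def su(1)
      by (metis mult.assoc mult.commute mult_dvd_mono dvd_triv_left)
    hence "[tau * (2*m) = 0] (mod (p - 1))" by (simp add: cong_0_iff)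
    hence g1: "[int g ^ (tau * (2*m)) = int g ^ 0] (mod int p)" using G1[OF pp gp] by blast
    have g2: "[int g ^ (tau * (2*m)) = 2 ^ (2*m)] (mod int p)"
      using cong_pow[OF tau, of "2*m"] by (simp add: power_mult)
    have "[(2::int) ^ (2*m) = int g ^ 0] (mod int p)" using cong_trans[OF cong_sym[OF g2] g1] .
    hence "[int (2 ^ (2*m)) = int 1] (mod int p)" by simp
    hence "[2 ^ (2*m) = 1] (mod p)" using cong_int_iff by blast
    hence "ord p 2 dvd 2 * m" using ord_divides by blast
    hence "4 dvd 2 * m" using o2 dvd_trans by blast
    hence "even m" by presburger
    thus False using em(2) by simp
  qed
  have "\<not> int p dvd int c0" using c0_range by (auto dest: zdvd_imp_le)
  then obtain gam where gam: "[int g ^ gam = int c0] (mod int p)" using G2[OF pp gp] by blast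
  have "\<not> p dvd c0" using c0_range by (auto dest: dvd_imp_le)
  hence fc: "[c0 ^ (p - 1) = 1] (mod p)" using fermat_theorem[OF pp] by blast
  have "ord p c0 dvd p - 1" using fc ord_divides by blast
  hence "ord p c0 dvd 2^e * m" unfolding em(1) .
  hence "ord p c0 dvd m" by (rule odd_dvd_cancel2[OF oc])
  hence "[c0 ^ m = 1] (mod p)" using ord_divides by blast
  hence cm: "[int c0 ^ m = 1] (mod int p)" using cong_int_iff[of "c0 ^ m" 1 p] by simp
  have "[int g ^ (gam * m) = int c0 ^ m] (mod int p)"
    using cong_pow[OF gam, of m] by (simp add: power_mult)
  hence "[int g ^ (gam * m) = int g ^ 0] (mod int p)" using cong_trans[OF _ cm] by simp
  hence "[gam * m = 0] (mod (p - 1))" using G1[OF pp gp] by blast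
  hence "2^e * m dvd gam * m" using em(1) by (simp add: cong_0_iff)
  hence "2^e dvd gam" using mpos by simp
  then obtain v where v: "gam = 2^e * v" by blast
  define \<alpha> where "\<alpha> = (\<lambda>a::int. if a = 1 then 0 else if a = -1 then h else if a = 2 then tau else h + tau + gam)"
  have acong: "[int g ^ (\<alpha> a) = a] (mod int p)" if a: "a \<in> {-1,1,2,3}" for a
  proof -
    consider "a = -1" | "a = 1" | "a = 2" | "a = 3" using a by auto
    thus ?thesis
    proof cases
      case 4
      have "[int g ^ h * int g ^ tau * int g ^ gam = (-1) * 2 * int c0] (mod int p)"
        using cong_mult[OF cong_mult[OF gh tau] gam] .
      moreover have "[(-1) * 2 * int c0 = 3] (mod int p)"
      proof -
        have "[- (2 * int c0) = - (-3)] (mod int p)"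
          using c0_cong cong_minus_minus_iff[of "2 * int c0" "-3" "int p"] by blast
        thus ?thesis by simp
      qed
      ultimately show ?thesis using 4 unfolding \<alpha>_def by (simp add: power_add cong_trans)
    qed (use gh tau in \<open>auto simp: \<alpha>_def\<close>)
  qed
  have aint: "int K - int (\<alpha> a) =
      (if a = 1 then int K else if a = -1 then int K - 2^(e-1) * int m
       else if a = 2 then int K - 2^s * int u else int K - 2^(e-1) * int m - 2^s * int u - 2^e * int v)"
    for K a
    unfolding \<alpha>_def using ih su(1) v by auto
  define B where "B = {y \<in> {1..<int p}. \<exists>k. [int g ^ k = y] (mod int p) \<and> Q s e (int k)}"
  have key1: "Q s e (int K - int (\<alpha> a))"
    if a: "a \<in> {-1,1,2,3}" and b: "b \<in> B" and r: "[a * b = int g ^ K] (mod int p)" for a b K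
  proof -
    from b obtain k where k: "[int g ^ k = b] (mod int p)" "Q s e (int k)" unfolding B_def by blast
    have "[int g ^ (\<alpha> a) * int g ^ k = a * b] (mod int p)" using cong_mult[OF acong[OF a] k(1)] .
    hence "[int g ^ (\<alpha> a + k) = int g ^ K] (mod int p)" using r cong_trans by (simp add: power_add)
    hence "[\<alpha> a + k = K] (mod (p - 1))" using G1[OF pp gp] by blast
    hence "[int (\<alpha> a + k) = int K] (mod int (p - 1))" using cong_int_iff by blast
    hence "int (p - 1) dvd int (\<alpha> a) + int k - int K" by (simp add: cong_iff_dvd_diff)
    then obtain t where t: "int (\<alpha> a) + int k - int K = int (p - 1) * t" by blast
    have "int k = (int K - int (\<alpha> a)) + 2^e * (int m * t)" using t intn by simp
    thus ?thesis using k(2) Q_period[OF se] by metis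
  qed
  have key2: "\<exists>b\<in>B. [a * b = int g ^ K] (mod int p)"
    if a: "a \<in> {-1,1,2,3}" and ok: "Q s e (int K - int (\<alpha> a))" for a K
  proof -
    define d where "d = int K - int (\<alpha> a)"
    define kk where "kk = d mod int (p - 1)"
    have kk0: "kk \<ge> 0" unfolding kk_def using p_ge9 by simp
    define k where "k = nat kk"
    have ik: "int k = kk" unfolding k_def using kk0 by simp
    have "kk = d + 2^e * (- (int m * (d div int (p - 1))))"
      unfolding kk_def using intn by (simp add: minus_div_mult_eq_mod[symmetric] algebra_simps)
    hence Qk: "Q s e (int k)" using ok Q_period[OF se] unfolding d_def ik by metis
    define b where "b = int g ^ k mod int p"
    have bB: "b \<in> B"
    proof -
      have "b \<ge> 0" "b < int p" unfolding b_def using p_ge9 by auto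
      moreover have "b \<noteq> 0" using G3[OF pp gp, of k] unfolding b_def by (auto simp: dvd_eq_mod_eq_0)
      moreover have "[int g ^ k = b] (mod int p)" unfolding b_def by (simp add: cong_def)
      ultimately show ?thesis unfolding B_def using Qk by auto
    qed
    have "[kk = d] (mod int (p - 1))" unfolding kk_def by (simp add: cong_def)
    hence "[int (\<alpha> a) + kk = int (\<alpha> a) + d] (mod int (p - 1))" by (simp add: cong_add)
    hence "[int (\<alpha> a + k) = int K] (mod int (p - 1))" unfolding d_def using ik by simp
    hence "[\<alpha> a + k = K] (mod (p - 1))" using cong_int_iff by blast
    hence gK: "[int g ^ (\<alpha> a + k) = int g ^ K] (mod int p)" using G1[OF pp gp] by blast
    have "[a * b = int g ^ (\<alpha> a) * int g ^ k] (mod int p)"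
      using cong_mult[OF acong[OF a] cong_sym[OF cong_mod_leftI[OF cong_refl[of "int g ^ k"]]]]
      unfolding b_def by (simp add: cong_sym_eq)
    hence "[a * b = int g ^ K] (mod int p)" using gK by (simp add: power_add cong_trans)
    thus ?thesis using bB by blast
  qed
  have ex1: "\<exists>a\<in>{-1,1,2,3}. Q s e (int K - int (\<alpha> a))" for K
    using Q_exactly_one(1)[OF se, where K="int K" and m="int m" and u="int u" and v="int v"] em(2) su(2) aint[of K] by auto
  have uq: "a1 = a2" if "a1 \<in> {-1,1,2,3}" "a2 \<in> {-1,1,2,3}"
      "Q s e (int K - int (\<alpha> a1))" "Q s e (int K - int (\<alpha> a2))" for a1 a2 K
    using that Q_exactly_one(2,3,5)[OF se, where K="int K" and m="int m" and u="int u"]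
      Q_exactly_one(4,6,7)[OF se, where K="int K" and m="int m" and u="int u" and v="int v"] em(2) su(2) aint[of K a1] aint[of K a2]
    by auto
  have "perfect_B_m1_3 p B"
    unfolding perfect_B_m1_3_def
  proof (intro conjI ballI)
    show "B \<subseteq> {0..<int p}" unfolding B_def by auto
  next
    fix a b assume a: "a \<in> {-1,1,2,3::int}" and b: "b \<in> B"
    have "b \<in> {1..<int p}" using b unfolding B_def by auto
    hence "\<not> int p dvd b" by (auto dest: zdvd_imp_le)
    hence "\<not> int p dvd a * b" using mul_ndvd A_ndvd[OF a] by blast
    thus "\<not> [a * b = 0] (mod int p)" by (simp add: cong_0_iff)
  next
    fix x assume x: "x \<in> {1..<int p}"
    hence "\<not> int p dvd x" by (auto dest: zdvd_imp_le)
    then obtain K where K: "[int g ^ K = x] (mod int p)" using G2[OF pp gp] by blast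
    obtain a where a: "a \<in> {-1,1,2,3}" "Q s e (int K - int (\<alpha> a))" using ex1 by blast
    obtain b where b: "b \<in> B" "[a * b = int g ^ K] (mod int p)" using key2[OF a] by blast
    have rx: "[a * b = x] (mod int p)" using b(2) K cong_trans by blast
    show "\<exists>!ab. fst ab \<in> {-1,1,2,3} \<and> snd ab \<in> B \<and> [fst ab * snd ab = x] (mod int p)"
    proof (rule ex1I[of _ "(a, b)"])
      show "fst (a, b) \<in> {-1,1,2,3} \<and> snd (a, b) \<in> B \<and> [fst (a, b) * snd (a, b) = x] (mod int p)"
        using a b rx by simp
    next
      fix ab assume ab: "fst ab \<in> {-1,1,2,3} \<and> snd ab \<in> B \<and> [fst ab * snd ab = x] (mod int p)"
      obtain a' b' where ab': "ab = (a', b')" by fastforce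
      have a': "a' \<in> {-1,1,2,3}" and b': "b' \<in> B" and r': "[a' * b' = x] (mod int p)"
        using ab unfolding ab' by auto
      have "[a' * b' = int g ^ K] (mod int p)" using r' K cong_sym cong_trans by blast
      hence "Q s e (int K - int (\<alpha> a'))" using key1[OF a' b'] by blast
      hence aa: "a' = a" using uq[OF a' a(1) _ a(2)] by blast
      have "[a * b' = a * b] (mod int p)" using r' rx aa cong_sym cong_trans by blast
      hence "[b' = b] (mod int p)" using cong_mult_lcancel[OF A_cop[OF a(1)]] by blast
      moreover have "b' \<ge> 0" "b' < int p" "b \<ge> 0" "b < int p" using b(1) b' unfolding B_def by auto
      ultimately have "b' = b" using cong_less_imp_eq_int by blast
      thus "ab = (a, b)" using aa ab' by simp
    qed
  qed
  thus ?thesis by blast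
qed

end

theorem theorem4p7:
  fixes p :: nat
  assumes "prime p" and "odd p" and "[p = 1] (mod 8)"
  shows "(\<exists>B. perfect_B_m1_3 p B) \<longleftrightarrow>
           odd (ord p (minus_three_halves p)) \<and> 4 dvd ord p 2"
proof -
  have m: "minus_three_halves p = c0 p" using mth[OF assms(1,3)] c0_def[OF assms(1,3)] by simp
  show ?thesis
  proof
    assume "\<exists>B. perfect_B_m1_3 p B"
    then obtain B where B: "perfect_B_m1_3 p B" by blast
    show "odd (ord p (minus_three_halves p)) \<and> 4 dvd ord p 2"
      using ordc_odd[OF assms(1,3) B] ord2_4[OF assms(1,3) B] m by simp
  next
    assume "odd (ord p (minus_three_halves p)) \<and> 4 dvd ord p 2"
    thus "\<exists>B. perfect_B_m1_3 p B" using suff[OF assms(1,3)] m by simp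
  qed
qed

end
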